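(* Let $n\geq 1$ and $k\geq 0$ be integers and $d_1,\dots,d_k$ positive integers with $\sum_{i=1}^k d_i\leq n+1$. Then $F_n(t;d_1,\dots,d_k)$ is a polynomial in $t$ with non-negative coefficients.
   Context: For an integer $m>0$, $\binom{t}{m}=\frac{1}{m!}\prod_{i=0}^{m-1}(t-i)$. For $I\subset\{1,\dots,k\}$, $d_I=\sum_{i\in I}d_i$ (with $d_\emptyset=0$). Define $F_n(t;d_1,\dots,d_k)=\sum_{I\subset\{1,\dots,k\}}(-1)^{|I|}\binom{t+n-d_I}{n}$. *)

theory Defs
  imports Complex_Main "HOL-Computational_Algebra.Polynomial"
begin

definition F :: "nat \<Rightarrow> nat \<Rightarrow> (nat \<Rightarrow> nat) \<Rightarrow> real \<Rightarrow> real" where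
  "F n k d t = (\<Sum>I\<in>Pow {1..k}. (-1) ^ card I * ((t + real n - real (sum d I)) gchoose n))"

end

theory Submission
  imports Defs "HOL-Computational_Algebra.Computational_Algebra"
begin

abbreviation cpoly :: "real poly \<Rightarrow> complex poly" where "cpoly p \<equiv> map_poly complex_of_real p"

lemma cpoly_add: "cpoly (p + q) = cpoly p + cpoly q"
  by (rule poly_eqI) (simp add: coeff_map_poly)

lemma cpoly_diff: "cpoly (p - q) = cpoly p - cpoly q"
  by (rule poly_eqI) (simp add: coeff_map_poly)

lemma cpoly_smult: "cpoly (smult c p) = smult (of_real c) (cpoly p)"
  by (rule poly_eqI) (simp add: coeff_map_poly)

lemma cpoly_mult: "cpoly (p * q) = cpoly p * cpoly q"
  by (induction p) (auto simp: map_poly_pCons cpoly_add cpoly_smult)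

lemma cpoly_sum: "cpoly (\<Sum>i\<in>A. f i) = (\<Sum>i\<in>A. cpoly (f i))"
  by (induction A rule: infinite_finite_induct) (auto simp: cpoly_add)

lemma cpoly_prod: "cpoly (\<Prod>i\<in>A. f i) = (\<Prod>i\<in>A. cpoly (f i))"
  by (induction A rule: infinite_finite_induct) (auto simp: cpoly_mult)

lemma cpoly_pair: "cpoly [:a, b:] = [:of_real a, of_real b:]"
  by (simp add: map_poly_pCons)

lemma poly_cpoly_real: "poly (cpoly p) (of_real x) = of_real (poly p x)"
  by (induction p) (auto simp: map_poly_pCons)

lemma poly_cpoly_cnj: "poly (cpoly p) (cnj z) = cnj (poly (cpoly p) z)"
proof -
  have "map_poly cnj (cpoly p) = cpoly p"
    by (rule poly_eqI) (simp add: coeff_map_poly)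
  then show ?thesis using poly_cnj[of "cpoly p" z] by simp
qed

lemma nonneg_mult:
  fixes a b :: "real poly"
  assumes "\<forall>j. coeff a j \<ge> 0" "\<forall>j. coeff b j \<ge> 0"
  shows "coeff (a * b) j \<ge> 0"
  using assms by (auto simp: coeff_mult intro!: sum_nonneg)

lemma cpoly_eq_0: "cpoly p = 0 \<longleftrightarrow> p = 0"
  by (simp add: map_poly_eq_0_iff)

lemma degree_cpoly: "degree (cpoly p) = degree p"
  by (simp add: degree_map_poly)

lemma stable_nonneg:
  fixes p :: "real poly"
  assumes "p \<noteq> 0" "\<forall>z. poly (cpoly p) z = 0 \<longrightarrow> Re z \<le> 0"
  shows "\<exists>q. p = smult (lead_coeff p) q \<and> (\<forall>j. coeff q j \<ge> 0)"
  using assms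
proof (induction "degree p" arbitrary: p rule: less_induct)
  case less
  show ?case
  proof (cases "degree p = 0")
    case True
    then obtain c where "p = [:c:]" using degree_eq_zeroE by blast
    then show ?thesis by (intro exI[of _ 1]) auto
  next
    case False
    then have "\<not> constant (poly (cpoly p))" by (simp add: constant_degree degree_cpoly)
    then obtain z where z: "poly (cpoly p) z = 0" using fundamental_theorem_of_algebra by blast
    have rez: "Re z \<le> 0" using less.prems z by blast
    have roots: "\<forall>w. poly (cpoly r) w = 0 \<longrightarrow> Re w \<le> 0" if "p = s * r" for s r
      using less.prems(2) that by (auto simp: cpoly_mult)
    show ?thesis
    proof (cases "Im z = 0")
      case True
      define r where "r = Re z"
      have zr: "z = of_real r" using True by (simp add: r_def complex_eq_iff)
      have "poly p r = 0" using z zr poly_cpoly_real[of p r] by simp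
      then obtain p1 where p1: "p = [:-r,1:] * p1" using poly_eq_0_iff_dvd by (metis dvdE)
      have "p1 \<noteq> 0" using less.prems p1 by auto
      have "degree p = degree [:-r,1::real:] + degree p1" using p1 \<open>p1\<noteq>0\<close> by (metis degree_mult_eq pCons_eq_0_iff zero_neq_one)
      then have dg: "degree p = Suc (degree p1)" by simp
      have lc: "lead_coeff p = lead_coeff p1" using p1 by (metis lead_coeff_mult lead_coeff_pCons(1) lead_coeff_1 mult_1 one_neq_zero pCons_one)
      obtain q1 where q1: "p1 = smult (lead_coeff p1) q1" "\<forall>j. coeff q1 j \<ge> 0"
        using less.hyps[of p1] dg \<open>p1\<noteq>0\<close> roots[OF p1] by auto
      have nn: "\<forall>j. coeff [:-r,1:] j \<ge> 0" using rez r_def by (auto simp: coeff_pCons split: nat.splits)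
      show ?thesis
        apply (intro exI[of _ "[:-r,1:] * q1"] conjI allI)
        subgoal using p1 q1(1) lc by (metis mult_smult_right)
        subgoal for j using nonneg_mult[OF nn q1(2)] by blast
        done
    next
      case False
      define r2 where "r2 = [:(cmod z)^2, -2 * Re z, 1:]"
      have cr2: "cpoly r2 = [:-z,1:] * [:-cnj z,1:]"
        using cmod_power2[of z] by (simp add: r2_def map_poly_pCons complex_eq_iff power2_eq_square algebra_simps)
      have zc: "poly (cpoly p) (cnj z) = 0" using z poly_cpoly_cnj by simp
      have r20: "r2 \<noteq> 0" by (simp add: r2_def)
      have dr2: "degree r2 = 2" by (simp add: r2_def)
      define m where "m = p mod r2"
      define p1 where "p1 = p div r2"
      have pm: "p = r2 * p1 + m" by (simp add: m_def p1_def)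
      have mz: "poly (cpoly m) w = 0" if "w = z \<or> w = cnj z" for w
      proof -
        have "poly (cpoly r2) w = 0" using that cr2 by auto
        moreover have "poly (cpoly p) w = 0" using that z zc by auto
        moreover have "poly (cpoly p) w = poly (cpoly r2) w * poly (cpoly p1) w + poly (cpoly m) w"
          by (subst pm) (simp add: cpoly_add cpoly_mult)
        ultimately show ?thesis by simp
      qed
      have "m = 0"
      proof (rule ccontr)
        assume "m \<noteq> 0"
        then have "degree m < 2" using degree_mod_less'[OF r20] m_def dr2 by simp
        then have meq: "m = [:coeff m 0, coeff m 1:]"
          by (intro poly_eqI) (auto simp: coeff_pCons coeff_eq_0 split: nat.splits)
        have ev: "poly (cpoly m) w = of_real (coeff m 0) + of_real (coeff m 1) * w" for w
          by (subst meq) (simp add: map_poly_pCons)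
        have e1: "of_real (coeff m 0) + of_real (coeff m 1) * z = 0" using mz[of z] ev by simp
        have e2: "of_real (coeff m 0) + of_real (coeff m 1) * cnj z = 0" using mz[of "cnj z"] ev by simp
        have "of_real (coeff m 1) * (z - cnj z) = (of_real (coeff m 0) + of_real (coeff m 1) * z) - (of_real (coeff m 0) + of_real (coeff m 1) * cnj z)"
          by (simp add: algebra_simps)
        then have "of_real (coeff m 1) * (z - cnj z) = 0" by (simp only: e1 e2 diff_self)
        moreover have "z - cnj z \<noteq> 0" using False by (simp add: complex_eq_iff)
        ultimately have c1: "coeff m 1 = 0" by simp
        then have "coeff m 0 = 0" using e1 by simp
        with c1 meq have "m = 0" by simp
        with \<open>m \<noteq> 0\<close> show False by simp
      qed
      then have p1d: "p = r2 * p1" using pm by simp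
      have "p1 \<noteq> 0" using less.prems p1d by auto
      have dg: "degree p = degree p1 + 2" using p1d \<open>p1\<noteq>0\<close> r20 dr2 by (simp add: degree_mult_eq)
      have "lead_coeff r2 = 1" by (simp add: r2_def)
      then have lc: "lead_coeff p = lead_coeff p1" using p1d by (metis lead_coeff_mult mult_1)
      obtain q1 where q1: "p1 = smult (lead_coeff p1) q1" "\<forall>j. coeff q1 j \<ge> 0"
        using less.hyps[of p1] dg \<open>p1\<noteq>0\<close> roots[OF p1d] by auto
      have nn: "\<forall>j. coeff r2 j \<ge> 0" using rez by (auto simp: r2_def coeff_pCons split: nat.splits)
      show ?thesis
        apply (intro exI[of _ "r2 * q1"] conjI allI)
        subgoal using p1d q1(1) lc by (metis mult_smult_right)
        subgoal for j using nonneg_mult[OF nn q1(2)] by blast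
        done
    qed
  qed
qed

definition act :: "complex poly \<Rightarrow> (complex \<Rightarrow> complex) \<Rightarrow> complex \<Rightarrow> complex" where
  "act h f z = (\<Sum>j\<le>degree h. coeff h j * f (z - of_nat j))"

lemma act_bound: "degree h \<le> N \<Longrightarrow> act h f z = (\<Sum>j\<le>N. coeff h j * f (z - of_nat j))"
  unfolding act_def by (rule sum.mono_neutral_left) (auto simp: coeff_eq_0)

lemma act_add: "act (p + q) f z = act p f z + act q f z"
proof -
  define N where "N = max (degree p) (degree q)"
  have "act (p + q) f z = (\<Sum>j\<le>N. coeff (p+q) j * f (z - of_nat j))"
    by (rule act_bound) (simp add: N_def degree_add_le_max)
  also have "\<dots> = (\<Sum>j\<le>N. coeff p j * f (z - of_nat j)) + (\<Sum>j\<le>N. coeff q j * f (z - of_nat j))"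
    by (simp add: distrib_right sum.distrib)
  also have "\<dots> = act p f z + act q f z"
    using act_bound[of p N f z] act_bound[of q N f z] by (simp add: N_def)
  finally show ?thesis .
qed

lemma act_smult: "act (smult a p) f z = a * act p f z"
proof -
  have "act (smult a p) f z = (\<Sum>j\<le>degree p. coeff (smult a p) j * f (z - of_nat j))"
    by (rule act_bound) (simp add: degree_smult_le)
  then show ?thesis by (simp add: act_def sum_distrib_left mult.assoc)
qed

lemma act_pCons0: "act (pCons 0 p) f z = act p f (z - 1)"
proof -
  have "act (pCons 0 p) f z = (\<Sum>j\<le>Suc (degree p). coeff (pCons 0 p) j * f (z - of_nat j))"
    by (rule act_bound) (simp add: degree_pCons_le)
  also have "\<dots> = (\<Sum>j\<le>degree p. coeff p j * f (z - 1 - of_nat j))"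
    by (subst sum.atMost_Suc_shift) (simp add: algebra_simps)
  finally show ?thesis by (simp add: act_def)
qed

lemma act_lin: "act ([:-a,1:] * h) f z = act h f (z - 1) - a * act h f z"
proof -
  have eq: "[:-a,1:] * h = smult (-a) h + pCons 0 h" by simp
  have "act ([:-a,1:] * h) f z = (-a) * act h f z + act h f (z - 1)"
    by (simp only: eq act_add act_smult act_pCons0)
  then show ?thesis by simp
qed

lemma act_1: "act 1 f z = f z"
  by (simp add: act_def)

fun opl :: "complex list \<Rightarrow> (complex \<Rightarrow> complex) \<Rightarrow> complex \<Rightarrow> complex" where
  "opl [] f = f"
| "opl (a # L) f = (\<lambda>z. opl L f (z - 1) - a * opl L f z)"

lemma act_prod_list: "act (prod_list (map (\<lambda>a. [:-a,1:]) L)) f z = opl L f z"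
proof (induction L arbitrary: z)
  case Nil
  then show ?case by (simp add: act_1)
next
  case (Cons a L)
  have "act (prod_list (map (\<lambda>a. [:-a,1:]) (a # L))) f z = act ([:-a,1:] * prod_list (map (\<lambda>a. [:-a,1:]) L)) f z"
    by simp
  also have "\<dots> = opl (a # L) f z" by (simp only: act_lin Cons.IH opl.simps)
  finally show ?case .
qed

lemma opl_append: "opl (L1 @ L2) f = opl L1 (opl L2 f)"
  by (induction L1) auto

lemma opl_scale: "opl L (\<lambda>z. c * f z) z = c * opl L f z"
  by (induction L arbitrary: z) (auto simp: algebra_simps)

lemma unity_roots:
  assumes "d \<ge> 1"
  shows "\<exists>L. length L = d \<and> (\<forall>a\<in>set L. cmod a = 1) \<and> (\<forall>f z. f z - f (z - of_nat d) = - opl L f z)"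
proof -
  define P :: "complex poly" where "P = monom 1 d + (-1)"
  have dP: "degree P = d" unfolding P_def using assms
    by (subst degree_add_eq_left) (auto simp: degree_monom_eq)
  have lP: "lead_coeff P = 1" using dP assms by (simp add: P_def coeff_monom)
  then have P0: "P \<noteq> 0" by auto
  obtain L where L: "mset L = proots P" using ex_mset by blast
  have "P = smult (lead_coeff P) (\<Prod>x\<in>#proots P. [:-x, 1:])"
    by (rule complex_poly_decompose_multiset [symmetric])
  also have "(\<Prod>x\<in>#proots P. [:-x, 1:]) = prod_list (map (\<lambda>a. [:-a,1:]) L)"
    by (subst prod_mset_prod_list [symmetric]) (simp add: L[symmetric])
  finally have Peq: "P = prod_list (map (\<lambda>a. [:-a,1:]) L)" using lP by simp
  have len: "length L = d"
    using size_proots_complex[of P] L dP by (metis size_mset)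
  have unit: "cmod a = 1" if "a \<in> set L" for a
  proof -
    have "a \<in># proots P" using that L by (metis set_mset_mset)
    then have "poly P a = 0" using P0 by simp
    then have "a ^ d = 1" by (simp add: P_def poly_monom)
    then have "cmod a ^ d = 1 ^ d" by (metis norm_one norm_power power_one)
    then show ?thesis using assms by (subst (asm) power_eq_iff_eq_base) auto
  qed
  have actP: "act P f z = f (z - of_nat d) - f z" for f z
  proof -
    have "act P f z = (\<Sum>j\<le>d. (if d = j then f (z - of_nat j) else 0) - (if j = 0 then f (z - of_nat j) else 0))"
      unfolding act_def dP by (intro sum.cong) (auto simp: P_def coeff_monom)
    also have "\<dots> = f (z - of_nat d) - f z"
      by (simp only: sum_subtractf sum.delta sum.delta') simp
    finally show ?thesis .
  qed
  show ?thesis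
    using len unit actP act_prod_list Peq by (intro exI[of _ L]) auto
qed

lemma cmod_sq: "cmod u ^ 2 = Re u ^ 2 + Im u ^ 2"
  by (simp add: cmod_power2)

lemma fac_gt:
  assumes "Re r = -c" "Re z > -c + 1/2"
  shows "cmod (z - 1 - r) < cmod (z - r)"
proof -
  have "cmod (z - 1 - r) ^ 2 < cmod (z - r) ^ 2"
    unfolding cmod_sq using assms by (simp add: power2_eq_square algebra_simps)
  then show ?thesis by (rule power2_less_imp_less) simp
qed

lemma fac_lt:
  assumes "Re r = -c" "Re z < -c + 1/2"
  shows "cmod (z - r) < cmod (z - 1 - r)"
proof -
  have "cmod (z - r) ^ 2 < cmod (z - 1 - r) ^ 2"
    unfolding cmod_sq using assms by (simp add: power2_eq_square algebra_simps)
  then show ?thesis by (rule power2_less_imp_less) simp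
qed

lemma line_factor:
  fixes Q :: "complex poly" and c :: real
  assumes "\<forall>z. Re z \<noteq> -c \<longrightarrow> poly Q z \<noteq> 0"
  obtains r where "\<And>w. cmod (poly Q w) = cmod (lead_coeff Q) * (\<Prod>i<degree Q. cmod (w - r i))"
    "\<And>i. i < degree Q \<Longrightarrow> Re (r i) = -c" "lead_coeff Q \<noteq> 0"
proof -
  obtain r where r: "smult (lead_coeff Q) (\<Prod>i<degree Q. [:-r i, 1:]) = Q"
    using complex_poly_decompose' by blast
  have "poly Q (of_real (1 - c)) \<noteq> 0" using assms by simp
  then have Q0: "Q \<noteq> 0" by auto
  then have l0: "lead_coeff Q \<noteq> 0" by simp
  have pq: "poly Q w = lead_coeff Q * (\<Prod>i<degree Q. (w - r i))" for w
    by (subst r[symmetric]) (simp add: poly_prod)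
  have "Re (r i) = -c" if "i < degree Q" for i
  proof (rule ccontr)
    assume "Re (r i) \<noteq> -c"
    then have "poly Q (r i) \<noteq> 0" using assms by blast
    moreover have "(\<Prod>j<degree Q. (r i - r j)) = 0"
      using that by (intro prod_zero) auto
    ultimately show False using pq by simp
  qed
  moreover have "cmod (poly Q w) = cmod (lead_coeff Q) * (\<Prod>i<degree Q. cmod (w - r i))" for w
    by (simp add: pq norm_mult prod_norm[symmetric])
  ultimately show ?thesis using that l0 by blast
qed

lemma cmp_ge:
  fixes Q :: "complex poly" and c :: real
  assumes "\<forall>z. Re z \<noteq> -c \<longrightarrow> poly Q z \<noteq> 0" "Re z > -c + 1/2"
  shows "cmod (poly Q (z - 1)) \<le> cmod (poly Q z)"
proof -
  obtain r where r: "\<And>w. cmod (poly Q w) = cmod (lead_coeff Q) * (\<Prod>i<degree Q. cmod (w - r i))"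
    "\<And>i. i < degree Q \<Longrightarrow> Re (r i) = -c" using line_factor[OF assms(1)] by blast
  have "(\<Prod>i<degree Q. cmod (z - 1 - r i)) \<le> (\<Prod>i<degree Q. cmod (z - r i))"
    by (intro prod_mono) (auto intro: less_imp_le fac_gt[OF r(2) assms(2)])
  then show ?thesis by (simp add: r(1) mult_left_mono)
qed

lemma cmp_gt:
  fixes Q :: "complex poly" and c :: real
  assumes "\<forall>z. Re z \<noteq> -c \<longrightarrow> poly Q z \<noteq> 0" "Re z > -c + 1/2" "degree Q > 0"
  shows "cmod (poly Q (z - 1)) < cmod (poly Q z)"
proof -
  obtain r where r: "\<And>w. cmod (poly Q w) = cmod (lead_coeff Q) * (\<Prod>i<degree Q. cmod (w - r i))"
    "\<And>i. i < degree Q \<Longrightarrow> Re (r i) = -c" "lead_coeff Q \<noteq> 0" using line_factor[OF assms(1)] by blast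
  have "(\<Prod>i<degree Q. cmod (z - 1 - r i)) < (\<Prod>i<degree Q. cmod (z - r i))"
  proof (rule prod_mono_strict[of 0])
    show "cmod (z - 1 - r 0) < cmod (z - r 0)" using fac_gt[OF r(2) assms(2)] assms(3) by simp
    show "0 < cmod (z - r i)" if "i \<in> {..<degree Q}" for i
    proof -
      have "cmod (z - 1 - r i) < cmod (z - r i)" using fac_gt[OF r(2) assms(2)] that by auto
      then show ?thesis using norm_ge_zero[of "z - 1 - r i"] by linarith
    qed
  qed (use assms(3) fac_gt[OF r(2) assms(2)] in \<open>auto intro: less_imp_le\<close>)
  then show ?thesis using r(3) by (simp add: r(1))
qed

lemma cmp_le:
  fixes Q :: "complex poly" and c :: real
  assumes "\<forall>z. Re z \<noteq> -c \<longrightarrow> poly Q z \<noteq> 0" "Re z < -c + 1/2"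
  shows "cmod (poly Q z) \<le> cmod (poly Q (z - 1))"
proof -
  obtain r where r: "\<And>w. cmod (poly Q w) = cmod (lead_coeff Q) * (\<Prod>i<degree Q. cmod (w - r i))"
    "\<And>i. i < degree Q \<Longrightarrow> Re (r i) = -c" using line_factor[OF assms(1)] by blast
  have "(\<Prod>i<degree Q. cmod (z - r i)) \<le> (\<Prod>i<degree Q. cmod (z - 1 - r i))"
    by (intro prod_mono) (auto intro: less_imp_le fac_lt[OF r(2) assms(2)])
  then show ?thesis by (simp add: r(1) mult_left_mono)
qed

lemma lin_gt:
  assumes "L > 0" "Re z > - L / 2"
  shows "cmod z < cmod (of_real L + z)"
proof -
  have h: "0 < L * (L + 2 * Re z)" using assms by (intro mult_pos_pos) auto
  have "cmod z ^ 2 < cmod (of_real L + z) ^ 2"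
    unfolding cmod_sq using h by (simp add: power2_eq_square algebra_simps)
  then show ?thesis by (rule power2_less_imp_less) simp
qed

lemma lin_lt:
  assumes "L > 0" "Re z < - L / 2"
  shows "cmod (of_real L + z) < cmod z"
proof -
  have h: "L * (L + 2 * Re z) < 0" using assms by (intro mult_pos_neg) auto
  have "cmod (of_real L + z) ^ 2 < cmod z ^ 2"
    unfolding cmod_sq using h by (simp add: power2_eq_square algebra_simps)
  then show ?thesis by (rule power2_less_imp_less) simp
qed

definition Good :: "nat \<Rightarrow> nat \<Rightarrow> (complex \<Rightarrow> complex) \<Rightarrow> bool" where
  "Good n s \<phi> \<longleftrightarrow> (\<exists>Q. (\<forall>z. \<phi> z = pochhammer (z + 1) (n - s) * poly Q z) \<and>
      (\<forall>z. Re z \<noteq> - ((real n + 1 - real s) / 2) \<longrightarrow> poly Q z \<noteq> 0))"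

lemma Good_step:
  assumes "Good n s \<phi>" "s < n" "cmod a = 1"
  shows "Good n (Suc s) (\<lambda>z. \<phi> (z - 1) - a * \<phi> z)"
proof -
  obtain Q where Q: "\<And>z. \<phi> z = pochhammer (z + 1) (n - s) * poly Q z"
    "\<forall>z. Re z \<noteq> - ((real n + 1 - real s) / 2) \<longrightarrow> poly Q z \<noteq> 0"
    using assms(1) unfolding Good_def by blast
  define m where "m = n - Suc s"
  have nm: "n - s = Suc m" using assms(2) by (simp add: m_def)
  define L :: real where "L = real (n - s)"
  have L0: "L > 0" using nm by (simp add: L_def)
  have cL: "- ((real n + 1 - real s) / 2) + 1/2 = - L / 2" using assms(2) by (simp add: L_def of_nat_diff field_simps)
  define Q' where "Q' = [:0,1:] * pcompose Q [:-1,1:] - smult a ([:of_real L, 1:] * Q)"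
  have pQ': "poly Q' z = z * poly Q (z - 1) - a * ((of_real L + z) * poly Q z)" for z
    by (simp add: Q'_def poly_pcompose algebra_simps)
  have eq: "\<phi> (z - 1) - a * \<phi> z = pochhammer (z + 1) (n - Suc s) * poly Q' z" for z
  proof -
    have "\<phi> (z - 1) = z * pochhammer (z + 1) m * poly Q (z - 1)"
      using Q(1)[of "z - 1"] by (simp add: nm pochhammer_rec)
    moreover have "\<phi> z = pochhammer (z + 1) m * (of_real L + z) * poly Q z"
      using Q(1)[of z] by (simp add: nm pochhammer_Suc L_def algebra_simps)
    ultimately show ?thesis by (simp add: pQ' m_def algebra_simps)
  qed
  have nz: "poly Q' z \<noteq> 0" if "Re z \<noteq> - ((real n + 1 - real (Suc s)) / 2)" for z
  proof -
    have rz: "Re z \<noteq> - L / 2" using that assms(2) by (simp add: L_def of_nat_diff field_simps)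
    show ?thesis
    proof (cases "Re z > - L / 2")
      case True
      have q0: "poly Q z \<noteq> 0" using Q(2) True cL by auto
      have "cmod (z * poly Q (z - 1)) = cmod z * cmod (poly Q (z - 1))" by (simp add: norm_mult)
      also have "\<dots> \<le> cmod z * cmod (poly Q z)"
        using cmp_ge[OF Q(2), of z] True cL by (intro mult_left_mono) auto
      also have "\<dots> < cmod (of_real L + z) * cmod (poly Q z)"
        using lin_gt[OF L0 True] q0 by (intro mult_strict_right_mono) auto
      also have "\<dots> = cmod (a * ((of_real L + z) * poly Q z))" using assms(3) by (simp add: norm_mult)
      finally show ?thesis unfolding pQ' by auto
    next
      case False
      then have F: "Re z < - L / 2" using rz by auto
      have q0: "poly Q (z - 1) \<noteq> 0" using Q(2) F cL by auto
      have "cmod (a * ((of_real L + z) * poly Q z)) = cmod (of_real L + z) * cmod (poly Q z)"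
        using assms(3) by (simp add: norm_mult)
      also have "\<dots> \<le> cmod (of_real L + z) * cmod (poly Q (z - 1))"
        using cmp_le[OF Q(2), of z] F cL by (intro mult_left_mono) auto
      also have "\<dots> < cmod z * cmod (poly Q (z - 1))"
        using lin_lt[OF L0 F] q0 by (intro mult_strict_right_mono) auto
      also have "\<dots> = cmod (z * poly Q (z - 1))" by (simp add: norm_mult)
      finally show ?thesis unfolding pQ' by auto
    qed
  qed
  show ?thesis unfolding Good_def using eq nz by blast
qed

lemma Good_final:
  assumes "Good n n \<phi>" "cmod a = 1"
  shows "(\<forall>z. \<phi> (z - 1) - a * \<phi> z = 0 \<longrightarrow> Re z \<le> 0) \<or> (\<forall>z. \<phi> (z - 1) - a * \<phi> z = 0)"
proof -
  obtain Q where Q: "\<And>z. \<phi> z = poly Q z"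
    "\<forall>z. Re z \<noteq> - ((real n + 1 - real n) / 2) \<longrightarrow> poly Q z \<noteq> 0"
    using assms(1) unfolding Good_def by auto
  have Q2: "\<forall>z. Re z \<noteq> - (1/2) \<longrightarrow> poly Q z \<noteq> 0" using Q(2) by simp
  show ?thesis
  proof (cases "degree Q = 0")
    case True
    then obtain q where "Q = [:q:]" using degree_eq_zeroE by blast
    then show ?thesis using Q(1) by auto
  next
    case False
    have "Re z \<le> 0" if "\<phi> (z - 1) - a * \<phi> z = 0" for z
    proof (rule ccontr)
      assume "\<not> Re z \<le> 0"
      then have "cmod (poly Q (z - 1)) < cmod (poly Q z)"
        using cmp_gt[OF Q2, of z] False by auto
      also have "\<dots> = cmod (a * poly Q z)" using assms(2) by (simp add: norm_mult)
      finally show False using that Q(1) by auto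
    qed
    then show ?thesis by blast
  qed
qed

lemma Good_nz:
  assumes "Good n s \<phi>" "s \<le> n" "\<phi> z = 0"
  shows "Re z \<le> 0"
proof (rule ccontr)
  assume A: "\<not> Re z \<le> 0"
  obtain Q where Q: "\<And>z. \<phi> z = pochhammer (z + 1) (n - s) * poly Q z"
    "\<forall>z. Re z \<noteq> - ((real n + 1 - real s) / 2) \<longrightarrow> poly Q z \<noteq> 0"
    using assms(1) unfolding Good_def by blast
  have "- ((real n + 1 - real s) / 2) < 0" using assms(2) by simp
  then have "Re z \<noteq> - ((real n + 1 - real s) / 2)" using A by linarith
  then have "poly Q z \<noteq> 0" using Q(2) by blast
  moreover have "pochhammer (z + 1) (n - s) \<noteq> 0"
  proof
    assume "pochhammer (z + 1) (n - s) = 0"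
    then obtain k where "z + 1 = - of_nat k" by (auto simp: pochhammer_eq_0_iff)
    then have "Re z = - 1 - real k" by (simp add: complex_eq_iff algebra_simps)
    with A show False by simp
  qed
  ultimately show False using Q(1) assms(3) by simp
qed

lemma Good_base: "Good n 0 (\<lambda>z. (z + of_nat n) gchoose n)"
  unfolding Good_def
  by (rule exI[of _ "[:1 / fact n:]"]) (simp add: gbinomial_pochhammer')

lemma Good_list:
  "(\<forall>a\<in>set L. cmod a = 1) \<Longrightarrow> length L \<le> n \<Longrightarrow> Good n (length L) (opl L (\<lambda>z. (z + of_nat n) gchoose n))"
proof (induction L)
  case Nil
  then show ?case using Good_base by simp
next
  case (Cons a L)
  then show ?case using Good_step[of n "length L" _ a] by simp
qed

lemma roots_main:
  assumes "\<forall>a\<in>set L. cmod a = 1" "length L \<le> Suc n"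
  shows "(\<forall>z. opl L (\<lambda>z. (z + of_nat n) gchoose n) z = 0 \<longrightarrow> Re z \<le> 0) \<or>
         (\<forall>z. opl L (\<lambda>z. (z + of_nat n) gchoose n) z = 0)"
proof (cases "length L \<le> n")
  case True
  then show ?thesis using Good_nz Good_list[OF assms(1) True] by blast
next
  case False
  then obtain a L' where L: "L = a # L'" "length L' = n" using assms(2)
    by (cases L) auto
  have "Good n n (opl L' (\<lambda>z. (z + of_nat n) gchoose n))"
    using Good_list[of L' n] assms(1) L by simp
  from Good_final[OF this, of a] assms(1) L show ?thesis by simp
qed

definition Sop :: "nat \<Rightarrow> (nat \<Rightarrow> nat) \<Rightarrow> (complex \<Rightarrow> complex) \<Rightarrow> complex \<Rightarrow> complex" where
  "Sop k d f z = (\<Sum>I\<in>Pow {1..k}. (-1) ^ card I * f (z - of_nat (sum d I)))"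

lemma Sop_Suc: "Sop (Suc k) d f z = Sop k d f z - Sop k d f (z - of_nat (d (Suc k)))"
proof -
  have e: "{1..Suc k} = insert (Suc k) {1..k}" by auto
  have disj: "Pow {1..k} \<inter> insert (Suc k) ` Pow {1..k} = {}" by auto
  have inj: "inj_on (insert (Suc k)) (Pow {1..k})"
    by (rule inj_onI) (metis PowD atLeastAtMost_iff insert_ident n_not_Suc_n subsetD le_SucI not_less_eq_eq)
  have "Sop (Suc k) d f z = Sop k d f z + (\<Sum>I\<in>insert (Suc k) ` Pow {1..k}. (-1) ^ card I * f (z - of_nat (sum d I)))"
    unfolding Sop_def e Pow_insert by (rule sum.union_disjoint) (use disj in auto)
  also have "(\<Sum>I\<in>insert (Suc k) ` Pow {1..k}. (-1) ^ card I * f (z - of_nat (sum d I)))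
      = (\<Sum>I\<in>Pow {1..k}. (-1) ^ card (insert (Suc k) I) * f (z - of_nat (sum d (insert (Suc k) I))))"
    by (rule sum.reindex[OF inj, unfolded comp_def])
  also have "\<dots> = (\<Sum>I\<in>Pow {1..k}. - ((-1) ^ card I * f (z - of_nat (d (Suc k)) - of_nat (sum d I))))"
  proof (rule sum.cong[OF refl])
    fix I assume "I \<in> Pow {1..k}"
    then have fI: "finite I" "Suc k \<notin> I" by (auto intro: finite_subset)
    then show "(-1) ^ card (insert (Suc k) I) * f (z - of_nat (sum d (insert (Suc k) I))) =
        - ((-1) ^ card I * f (z - of_nat (d (Suc k)) - of_nat (sum d I)))"
      by (simp add: algebra_simps)
  qed
  also have "\<dots> = - Sop k d f (z - of_nat (d (Suc k)))"
    by (simp add: Sop_def sum_negf)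
  finally show ?thesis by simp
qed

lemma Sop_opl:
  assumes "\<forall>i\<in>{1..k}. d i > 0"
  shows "\<exists>L. length L = sum d {1..k} \<and> (\<forall>a\<in>set L. cmod a = 1) \<and> (\<forall>z. Sop k d f z = (-1) ^ k * opl L f z)"
  using assms
proof (induction k)
  case 0
  then show ?case by (intro exI[of _ "[]"]) (simp add: Sop_def)
next
  case (Suc k)
  then obtain L where L: "length L = sum d {1..k}" "\<forall>a\<in>set L. cmod a = 1"
    "\<forall>z. Sop k d f z = (-1) ^ k * opl L f z" by auto
  have "d (Suc k) \<ge> 1" using Suc.prems by (simp add: Suc_leI)
  then obtain M where M: "length M = d (Suc k)" "\<forall>a\<in>set M. cmod a = 1"
    "\<forall>g z. g z - g (z - of_nat (d (Suc k))) = - opl M g z"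
    using unity_roots by blast
  have e: "{1..Suc k} = insert (Suc k) {1..k}" by auto
  have "Sop (Suc k) d f z = (-1) ^ Suc k * opl (M @ L) f z" for z
  proof -
    have "Sop (Suc k) d f z = - opl M (Sop k d f) z" using Sop_Suc M(3) by simp
    also have "Sop k d f = (\<lambda>w. (-1) ^ k * opl L f w)" using L(3) by auto
    also have "- opl M (\<lambda>w. (-1) ^ k * opl L f w) z = (-1) ^ Suc k * opl (M @ L) f z"
      by (simp add: opl_scale opl_append)
    finally show ?thesis .
  qed
  moreover have "length (M @ L) = sum d {1..Suc k}" using L(1) M(1) e by simp
  ultimately show ?case using L(2) M(2) by (intro exI[of _ "M @ L"]) auto
qed

lemma poly_gp_gen:
  fixes c x :: "'a::field_char_0"
  shows "poly (smult (1 / fact n) (\<Prod>i<n. [:c - of_nat n + 1 + of_nat i, 1:])) x = (x + c) gchoose n"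
proof -
  have "(x + c) gchoose n = pochhammer (x + c - of_nat n + 1) n / fact n" by (rule gbinomial_pochhammer')
  also have "pochhammer (x + c - of_nat n + 1) n = (\<Prod>i<n. c - of_nat n + 1 + of_nat i + x)"
    by (simp add: pochhammer_prod lessThan_atLeast0 algebra_simps)
  finally show ?thesis by (simp add: poly_prod)
qed

definition gp :: "real \<Rightarrow> nat \<Rightarrow> real poly" where
  "gp c n = smult (1 / fact n) (\<Prod>i<n. [:c - of_nat n + 1 + of_nat i, 1:])"

lemma poly_gp: "poly (gp c n) x = (x + c) gchoose n"
  unfolding gp_def by (rule poly_gp_gen)

lemma poly_cpoly_gp: "poly (cpoly (gp c n)) z = (z + of_real c) gchoose n"
proof -
  have "cpoly (gp c n) = smult (1 / fact n) (\<Prod>i<n. [:of_real c - of_nat n + 1 + of_nat i, 1:])"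
    by (simp add: gp_def cpoly_smult cpoly_prod cpoly_pair)
  then show ?thesis using poly_gp_gen[of n "of_real c" z] by simp
qed

lemma F_one_nonneg:
  assumes "n \<ge> 1" "\<forall>i\<in>{1..k}. d i > 0" "(\<Sum>i=1..k. d i) \<le> n + 1"
  shows "F n k d 1 \<ge> 0"
proof -
  define T where "T I = (-1) ^ card I * real ((n + 1 - sum d I) choose n)" for I
  have sI: "sum d I \<le> n + 1" if "I \<in> Pow {1..k}" for I
  proof -
    have "sum d I \<le> sum d {1..k}" using that by (intro sum_mono2) auto
    then show ?thesis using assms(3) by simp
  qed
  have cI: "card I \<le> sum d I" if "I \<in> Pow {1..k}" for I
  proof -
    have "card I = (\<Sum>i\<in>I. 1)" by simp
    also have "\<dots> \<le> sum d I" using that assms(2) by (intro sum_mono) (auto simp: Suc_leI)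
    finally show ?thesis .
  qed
  have Feq: "F n k d 1 = (\<Sum>I\<in>Pow {1..k}. T I)"
    unfolding F_def T_def
  proof (rule sum.cong[OF refl])
    fix I assume "I \<in> Pow {1..k}"
    then have "sum d I \<le> n + 1" by (rule sI)
    then have "1 + real n - real (sum d I) = real (n + 1 - sum d I)" by (simp add: of_nat_diff)
    then show "(-1) ^ card I * ((1 + real n - real (sum d I)) gchoose n) =
        (-1) ^ card I * real ((n + 1 - sum d I) choose n)"
      by (simp add: binomial_gbinomial)
  qed
  have Tb: "T I \<ge> - (if card I = 1 then 1 else 0)" if I: "I \<in> Pow {1..k}" "I \<noteq> {}" for I
  proof (cases "card I = 1")
    case True
    then have "sum d I \<ge> 1" using cI[OF I(1)] by simp
    then have "n + 1 - sum d I \<le> n" by simp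
    then have "(n + 1 - sum d I) choose n \<le> 1"
      by (cases "n + 1 - sum d I < n") (auto simp: binomial_eq_0 le_less)
    then show ?thesis using True by (simp add: T_def)
  next
    case False
    have "finite I" using I(1) by (auto intro: finite_subset)
    then have "card I \<ge> 2" using False I(2) by (cases "card I") auto
    then have "sum d I \<ge> 2" using cI[OF I(1)] by simp
    then have "n + 1 - sum d I < n" using assms(1) by simp
    then show ?thesis using False by (simp add: T_def binomial_eq_0)
  qed
  have s1: "(\<Sum>I\<in>Pow {1..k}. T I) = T {} + (\<Sum>I\<in>Pow {1..k} - {{}}. T I)"
    by (rule sum.remove) auto
  have s2: "T {} = real n + 1" by (simp add: T_def)
  have s3: "(\<Sum>I\<in>Pow {1..k} - {{}}. T I) \<ge> (\<Sum>I\<in>Pow {1..k} - {{}}. - (if card I = 1 then 1 else 0))"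
    using Tb by (intro sum_mono) auto
  have s4: "(\<Sum>I\<in>Pow {1..k} - {{}}. - (if card I = 1 then 1 else 0)) =
      (\<Sum>I\<in>Pow {1..k}. - (if card I = 1 then (1::real) else 0))"
    using sum.remove[of "Pow {1..k}" "{}" "\<lambda>I. - (if card I = 1 then (1::real) else 0)"] by simp
  have s5: "(\<Sum>I\<in>Pow {1..k}. - (if card I = 1 then (1::real) else 0)) =
      - real (card {I\<in>Pow {1..k}. card I = 1})"
    by (simp add: sum_negf sum.inter_filter[symmetric])
  have s6: "{I\<in>Pow {1..k}. card I = 1} = {B. B \<subseteq> {1..k} \<and> card B = 1}" by auto
  have s7: "card {B. B \<subseteq> {1..k} \<and> card B = 1} = k" by (simp add: n_subsets)
  have s67: "real (card {I\<in>Pow {1..k}. card I = 1}) = real k" using s6 s7 by simp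
  have "F n k d 1 \<ge> real n + 1 - real k" using Feq s1 s2 s3 s4 s5 s67 by linarith
  moreover have "k \<le> n + 1"
  proof -
    have "k = card {1..k}" by simp
    also have "\<dots> \<le> sum d {1..k}" using cI[of "{1..k}"] by simp
    finally show ?thesis using assms(3) by simp
  qed
  ultimately show ?thesis by simp
qed

definition FP :: "nat \<Rightarrow> nat \<Rightarrow> (nat \<Rightarrow> nat) \<Rightarrow> real poly" where
  "FP n k d = (\<Sum>I\<in>Pow {1..k}. smult ((-1) ^ card I) (gp (real n - real (sum d I)) n))"

lemma poly_FP: "poly (FP n k d) t = F n k d t"
  by (simp add: FP_def F_def poly_sum poly_gp algebra_simps)

lemma poly_cpoly_FP: "poly (cpoly (FP n k d)) z = Sop k d (\<lambda>z. (z + of_nat n) gchoose n) z"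
  by (simp add: FP_def Sop_def cpoly_sum cpoly_smult poly_sum poly_cpoly_gp algebra_simps)

theorem theorem3p6:
  fixes n k :: nat and d :: "nat \<Rightarrow> nat"
  assumes "n \<ge> 1"
    and "\<forall>i\<in>{1..k}. d i > 0"
    and "(\<Sum>i=1..k. d i) \<le> n + 1"
  shows "\<exists>p :: real poly. (\<forall>t. F n k d t = poly p t) \<and> (\<forall>j. coeff p j \<ge> 0)"
proof -
  define p where "p = FP n k d"
  define G where "G = (\<lambda>z::complex. (z + of_nat n) gchoose n)"
  obtain L where L: "length L = sum d {1..k}" "\<forall>a\<in>set L. cmod a = 1"
    "\<forall>z. Sop k d G z = (-1) ^ k * opl L G z"
    using Sop_opl[OF assms(2)] by blast
  have pc: "poly (cpoly p) z = (-1) ^ k * opl L G z" for z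
    using poly_cpoly_FP[of n k d z] L(3) by (simp add: p_def G_def)
  have len: "length L \<le> Suc n" using L(1) assms(3) by simp
  have "\<forall>j. coeff p j \<ge> 0"
  proof (cases "\<forall>z. opl L G z = 0")
    case True
    then have "cpoly p = 0" using pc by (simp add: poly_all_0_iff_0[symmetric])
    then have "p = 0" by (simp add: cpoly_eq_0)
    then show ?thesis by simp
  next
    case False
    then have roots: "\<forall>z. poly (cpoly p) z = 0 \<longrightarrow> Re z \<le> 0"
      using roots_main[OF L(2) len] pc unfolding G_def by auto
    show ?thesis
    proof (cases "p = 0")
      case True
      then show ?thesis by simp
    next
      case False
      obtain q where q: "p = smult (lead_coeff p) q" "\<forall>j. coeff q j \<ge> 0"
        using stable_nonneg[OF False roots] by blast
      have lq: "lead_coeff q = 1"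
      proof -
        have "lead_coeff p = lead_coeff p * lead_coeff q" using q(1) by (metis lead_coeff_smult)
        then show ?thesis using False by simp
      qed
      have "coeff q (degree q) \<le> (\<Sum>i\<le>degree q. coeff q i)"
        using q(2) by (intro member_le_sum) auto
      then have pq1: "poly q 1 \<ge> 1" using lq by (simp add: poly_altdef)
      have "poly p 1 = lead_coeff p * poly q 1" by (subst q(1)) simp
      moreover have "poly p 1 \<ge> 0" using F_one_nonneg[OF assms] poly_FP by (simp add: p_def)
      ultimately have "lead_coeff p \<ge> 0" using pq1 by (simp add: zero_le_mult_iff)
      then show ?thesis using q by (metis coeff_smult mult_nonneg_nonneg)
    qed
  qed
  moreover have "\<forall>t. F n k d t = poly p t" by (simp add: p_def poly_FP)
  ultimately show ?thesis by blast
qed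

end
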